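(* Let $X_1,\dots,X_n,Y_1,\dots,Y_n$ be independent standard normal random variables, $a_1,\dots,a_n\in\mathbb{R}$, and $p\ge1$ an integer. Then $$\frac{p!}{2^p}\sum_{\lambda\vdash p}\Big(\prod_{k\in\lambda}\binom{2k}{k}\Big)m_\lambda(a_1,\dots,a_n,a_1,\dots,a_n)=\mathbb{E}\Big(\sum_{i=1}^na_i(X_i^2+Y_i^2)\Big)^p=2^p\,p!\,h_p(a_1,\dots,a_n).$$
   Context: The sum is over integer partitions $\lambda$ of $p$, the product over parts $k$ of $\lambda$ with multiplicity. $m_\lambda(b_1,\dots,b_{2n})$ is the monomial symmetric polynomial in $2n$ variables (sum of all distinct monomials whose multiset of nonzero exponents equals the parts of $\lambda$), here evaluated at two copies of $a_1,\dots,a_n$. $h_p(a_1,\dots,a_n)$ is the complete homogeneous symmetric polynomial of degree $p$, the sum of all monomials of degree $p$ in $a_1,\dots,a_n$. *)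

theory Defs
  imports "HOL-Probability.Probability" "HOL-Library.Multiset"
begin

definition partitions :: "nat \<Rightarrow> nat multiset set" where
  "partitions p = {lam. (\<forall>k\<in>#lam. 0 < k) \<and> sum_mset lam = p}"

definition exps :: "nat \<Rightarrow> (nat \<Rightarrow> nat) set" where
  "exps N = {\<alpha>. \<forall>i. N \<le> i \<longrightarrow> \<alpha> i = 0}"

definition nz_exps :: "nat \<Rightarrow> (nat \<Rightarrow> nat) \<Rightarrow> nat multiset" where
  "nz_exps N \<alpha> = image_mset \<alpha> (filter_mset (\<lambda>i. \<alpha> i \<noteq> 0) (mset_set {..<N}))"

definition monomial_sym :: "nat multiset \<Rightarrow> nat \<Rightarrow> (nat \<Rightarrow> real) \<Rightarrow> real" where
  "monomial_sym lam N b =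
     (\<Sum>\<alpha>\<in>{\<alpha>\<in>exps N. nz_exps N \<alpha> = lam}. \<Prod>i<N. b i ^ \<alpha> i)"

definition complete_hom :: "nat \<Rightarrow> nat \<Rightarrow> (nat \<Rightarrow> real) \<Rightarrow> real" where
  "complete_hom p n a =
     (\<Sum>\<alpha>\<in>{\<alpha>\<in>exps n. (\<Sum>i<n. \<alpha> i) = p}. \<Prod>i<n. a i ^ \<alpha> i)"

end

theory Submission
  imports Defs "HOL-Computational_Algebra.Formal_Power_Series"
begin


lemma half_gchoose_fact:
  "fact k * ((-1/2::real) gchoose k) = (-1/2)^k * fact (2*k) / (2^k * fact k)"
proof (induction k)
  case 0 then show ?case by simp
next
  case (Suc k)
  have "fact (Suc k) * ((-1/2::real) gchoose Suc k) = (\<Prod>i = 0..<Suc k. (-1/2::real) - of_nat i)"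
    by (rule gbinomial_mult_fact)
  also have "\<dots> = (\<Prod>i = 0..<k. (-1/2::real) - of_nat i) * (-1/2 - real k)" by simp
  also have "(\<Prod>i = 0..<k. (-1/2::real) - of_nat i) = fact k * ((-1/2::real) gchoose k)"
    by (rule gbinomial_mult_fact[symmetric])
  also have "\<dots> = (-1/2)^k * fact (2*k) / (2^k * fact k)" by (rule Suc.IH)
  also have "(-1/2::real)^k * fact (2*k) / (2^k * fact k) * (-1/2 - real k)
      = (-1/2)^(Suc k) * fact (2*Suc k) / (2^Suc k * fact (Suc k))"
  proof -
    have "fact (2*Suc k) = (fact (2*k) :: real) * (2*k+1) * (2*k+2)"
      by (simp add: algebra_simps)
    moreover have "fact (Suc k) = (fact k :: real) * (real k + 1)" by simp
    moreover have "(2::real)^Suc k = 2 * 2^k" by simp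
    ultimately show ?thesis
      apply (simp only:)
      apply (simp add: divide_simps)
      apply (simp add: algebra_simps)
      done
  qed
  finally show ?case .
qed

lemma central_gchoose: "real ((2*k) choose k) = (-4)^k * ((-1/2::real) gchoose k)"
proof -
  have "real ((2*k) choose k) = fact (2*k) / (fact k * fact k)"
    by (simp add: binomial_fact)
  moreover have "((-1/2::real) gchoose k) = (-1/2)^k * fact (2*k) / (2^k * fact k) / fact k"
    using half_gchoose_fact[of k] by (simp add: field_simps)
  moreover have "(-4::real)^k * (-1/2)^k / 2^k = 1"
    by (simp add: power_mult_distrib[symmetric] power_divide[symmetric])
  ultimately have e1: "fact k * fact k * real ((2*k) choose k) = fact (2*k)"
    and e2: "fact k * fact k * ((-4)^k * ((-1/2::real) gchoose k)) = fact (2*k)"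
    by (simp_all add: field_simps)
  have "(fact k * fact k :: real) \<noteq> 0" by simp
  with e1 e2 show ?thesis by (metis mult_left_cancel)
qed

lemma central_conv: "(\<Sum>k=0..m. real ((2*k) choose k) * real ((2*(m-k)) choose (m-k))) = 4^m"
proof -
  have "(\<Sum>k=0..m. real ((2*k) choose k) * real ((2*(m-k)) choose (m-k)))
      = (\<Sum>k=0..m. (-4)^m * (((-1/2::real) gchoose k) * ((-1/2) gchoose (m-k))))"
  proof (rule sum.cong)
    fix k assume "k \<in> {0..m}"
    then have "(-4::real)^k * (-4)^(m-k) = (-4)^m" by (simp add: power_add[symmetric])
    then show "real ((2*k) choose k) * real ((2*(m-k)) choose (m-k)) = (-4)^m * (((-1/2::real) gchoose k) * ((-1/2) gchoose (m-k)))"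
      unfolding central_gchoose by (metis (no_types, lifting) mult.commute mult.left_commute)
  qed simp
  also have "\<dots> = (-4)^m * ((-1::real) gchoose m)"
    by (simp add: sum_distrib_left[symmetric] gbinomial_Vandermonde)
  also have "((-1::real) gchoose m) = (-1)^m"
    using gbinomial_minus[of "1::real" m] binomial_gbinomial[of m m, where 'a=real] by simp
  finally show ?thesis by (simp add: power_mult_distrib[symmetric])
qed



definition Sx :: "nat \<Rightarrow> nat \<Rightarrow> (nat \<Rightarrow> nat) set" where
  "Sx N q = {\<beta>\<in>exps N. (\<Sum>i<N. \<beta> i) = q}"

definition Hw :: "(nat \<Rightarrow> real) \<Rightarrow> nat \<Rightarrow> nat \<Rightarrow> (nat \<Rightarrow> real) \<Rightarrow> real" where
  "Hw w q N c = (\<Sum>\<beta>\<in>Sx N q. \<Prod>i<N. w (\<beta> i) * c i ^ \<beta> i)"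

definition Fw :: "(nat \<Rightarrow> real) \<Rightarrow> real \<Rightarrow> real fps" where
  "Fw w x = Abs_fps (\<lambda>k. w k * x ^ k)"

lemma finite_Sx: "finite (Sx N q)"
proof -
  have "Sx N q \<subseteq> {f. \<forall>x. (x \<in> {..<N} \<longrightarrow> f x \<in> {..q}) \<and> (x \<notin> {..<N} \<longrightarrow> f x = 0)}"
  proof
    fix f assume f: "f \<in> Sx N q"
    have "\<forall>x. (x \<in> {..<N} \<longrightarrow> f x \<in> {..q}) \<and> (x \<notin> {..<N} \<longrightarrow> f x = 0)"
    proof (intro allI conjI impI)
      fix x assume x: "x \<in> {..<N}"
      have "f x \<le> (\<Sum>i<N. f i)" using x by (intro member_le_sum) auto
      then show "f x \<in> {..q}" using f by (auto simp: Sx_def)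
    next
      fix x assume "x \<notin> {..<N}"
      then show "f x = 0" using f by (auto simp: Sx_def exps_def)
    qed
    then show "f \<in> {f. \<forall>x. (x \<in> {..<N} \<longrightarrow> f x \<in> {..q}) \<and> (x \<notin> {..<N} \<longrightarrow> f x = 0)}" by simp
  qed
  then show ?thesis by (rule finite_subset) (intro finite_set_of_finite_funs; simp)
qed

lemma Sx_slice:
  assumes "j \<le> q"
  shows "{x \<in> Sx (Suc N) q. x N = j} = (\<lambda>g. g(N := j)) ` Sx N (q - j)"
proof (intro equalityI subsetI)
  fix x assume "x \<in> {x \<in> Sx (Suc N) q. x N = j}"
  then have x: "x \<in> Sx (Suc N) q" "x N = j" by auto
  define g where "g = x(N := 0)"
  have "(\<Sum>i<N. g i) = (\<Sum>i<N. x i)" unfolding g_def by (intro sum.cong) auto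
  moreover have "(\<Sum>i<Suc N. x i) = q" using x by (simp add: Sx_def)
  ultimately have "(\<Sum>i<N. g i) = q - j" using x by simp
  moreover have "g \<in> exps N" using x by (auto simp: g_def exps_def Sx_def)
  ultimately have "g \<in> Sx N (q - j)" by (simp add: Sx_def)
  moreover have "x = g(N := j)" using x by (auto simp: g_def)
  ultimately show "x \<in> (\<lambda>g. g(N := j)) ` Sx N (q - j)" by blast
next
  fix y assume "y \<in> (\<lambda>g. g(N := j)) ` Sx N (q - j)"
  then obtain g where g: "g \<in> Sx N (q - j)" and y: "y = g(N := j)" by auto
  have "(\<Sum>i<N. (g(N:=j)) i) = (\<Sum>i<N. g i)" by (intro sum.cong) auto
  then show "y \<in> {x \<in> Sx (Suc N) q. x N = j}" using g assms y by (auto simp: Sx_def exps_def)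
qed

lemma Hw_Suc: "Hw w q (Suc N) c = (\<Sum>j\<le>q. w j * c N ^ j * Hw w (q - j) N c)"
proof -
  let ?f = "\<lambda>\<beta>. \<Prod>i<Suc N. w (\<beta> i) * c i ^ \<beta> i"
  have img: "(\<lambda>x. x N) ` Sx (Suc N) q \<subseteq> {..q}"
  proof
    fix y assume "y \<in> (\<lambda>x. x N) ` Sx (Suc N) q"
    then obtain x where x: "x \<in> Sx (Suc N) q" "y = x N" by auto
    have "x N \<le> (\<Sum>i<Suc N. x i)" by (intro member_le_sum) auto
    then show "y \<in> {..q}" using x by (auto simp: Sx_def)
  qed
  have "Hw w q (Suc N) c = (\<Sum>j\<le>q. \<Sum>\<beta>\<in>{x \<in> Sx (Suc N) q. x N = j}. ?f \<beta>)"
    unfolding Hw_def by (rule sum.group[symmetric, OF finite_Sx _ img]) simp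
  also have "\<dots> = (\<Sum>j\<le>q. w j * c N ^ j * Hw w (q - j) N c)"
  proof (rule sum.cong[OF refl])
    fix j assume j: "j \<in> {..q}"
    have inj: "inj_on (\<lambda>g. g(N := j)) (Sx N (q - j))"
    proof (rule inj_onI)
      fix g h assume gh: "g \<in> Sx N (q - j)" "h \<in> Sx N (q - j)" "g(N := j) = h(N := j)"
      show "g = h"
      proof
        fix i show "g i = h i"
        proof (cases "i = N")
          case True then show ?thesis using gh by (auto simp: Sx_def exps_def)
        next
          case False
          have "(g(N := j)) i = (h(N := j)) i" using gh(3) by simp
          with False show ?thesis by simp
        qed
      qed
    qed
    have "(\<Sum>\<beta>\<in>{x \<in> Sx (Suc N) q. x N = j}. ?f \<beta>) = (\<Sum>g\<in>Sx N (q - j). ?f (g(N := j)))"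
      using j by (simp add: Sx_slice sum.reindex[OF inj])
    also have "\<dots> = (\<Sum>g\<in>Sx N (q - j). w j * c N ^ j * (\<Prod>i<N. w (g i) * c i ^ g i))"
    proof (rule sum.cong[OF refl])
      fix g assume "g \<in> Sx N (q - j)"
      have "(\<Prod>i<N. w ((g(N:=j)) i) * c i ^ (g(N:=j)) i) = (\<Prod>i<N. w (g i) * c i ^ g i)"
        by (intro prod.cong) auto
      then show "?f (g(N := j)) = w j * c N ^ j * (\<Prod>i<N. w (g i) * c i ^ g i)"
        by simp
    qed
    also have "\<dots> = w j * c N ^ j * Hw w (q - j) N c"
      by (simp add: Hw_def sum_distrib_left)
    finally show "(\<Sum>\<beta>\<in>{x \<in> Sx (Suc N) q. x N = j}. ?f \<beta>) = w j * c N ^ j * Hw w (q - j) N c" .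
  qed
  finally show ?thesis .
qed

lemma Sx_0: "Sx 0 q = (if q = 0 then {\<lambda>_. 0} else {})"
  by (auto simp: Sx_def exps_def)

lemma Hw_fps: "Hw w q N c = fps_nth (\<Prod>i<N. Fw w (c i)) q"
proof (induction N arbitrary: q)
  case 0
  then show ?case by (simp add: Hw_def Sx_0)
next
  case (Suc N)
  have "fps_nth (\<Prod>i<Suc N. Fw w (c i)) q = fps_nth (Fw w (c N) * (\<Prod>i<N. Fw w (c i))) q"
    by (simp add: mult.commute)
  also have "\<dots> = (\<Sum>j=0..q. fps_nth (Fw w (c N)) j * fps_nth (\<Prod>i<N. Fw w (c i)) (q - j))"
    by (rule fps_mult_nth)
  also have "\<dots> = (\<Sum>j\<le>q. w j * c N ^ j * Hw w (q - j) N c)"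
    by (simp add: Fw_def Suc.IH atLeast0AtMost)
  finally show ?case by (simp add: Hw_Suc)
qed



lemma nz_exps_eq: "nz_exps N \<beta> = image_mset \<beta> (mset_set {i\<in>{..<N}. \<beta> i \<noteq> 0})"
  by (simp add: nz_exps_def)

lemma sum_nz_exps: "sum_mset (nz_exps N \<beta>) = (\<Sum>i<N. \<beta> i)"
proof -
  have "sum_mset (nz_exps N \<beta>) = (\<Sum>i\<in>{i\<in>{..<N}. \<beta> i \<noteq> 0}. \<beta> i)"
    by (simp add: nz_exps_eq sum_unfold_sum_mset)
  also have "\<dots> = (\<Sum>i<N. \<beta> i)"
    by (rule sum.mono_neutral_left) auto
  finally show ?thesis .
qed

lemma prod_nz_exps:
  "(\<Prod>k\<in>#nz_exps N \<beta>. real ((2 * k) choose k)) = (\<Prod>i<N. real ((2 * \<beta> i) choose \<beta> i))"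
proof -
  have "(\<Prod>k\<in>#nz_exps N \<beta>. real ((2 * k) choose k)) = (\<Prod>i\<in>{i\<in>{..<N}. \<beta> i \<noteq> 0}. real ((2 * \<beta> i) choose \<beta> i))"
    by (simp add: nz_exps_eq prod_unfold_prod_mset multiset.map_comp o_def)
  also have "\<dots> = (\<Prod>i<N. real ((2 * \<beta> i) choose \<beta> i))"
    by (rule prod.mono_neutral_left) auto
  finally show ?thesis .
qed

lemma pos_nz_exps: "k \<in># nz_exps N \<beta> \<Longrightarrow> 0 < k"
  by (auto simp: nz_exps_eq)

lemma mem_le_sum_mset: "(k::nat) \<in># lam \<Longrightarrow> k \<le> sum_mset lam"
proof -
  assume "k \<in># lam"
  then obtain lam' where "lam = add_mset k lam'" by (blast dest: multi_member_split)
  then show ?thesis by simp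
qed

lemma size_le_sum_mset: "(\<forall>k\<in>#lam. (0::nat) < k) \<Longrightarrow> size lam \<le> sum_mset lam"
proof (induction lam)
  case empty then show ?case by simp
next
  case (add x lam) then show ?case by auto
qed

lemma finite_partitions: "finite (partitions p)"
proof -
  have "partitions p \<subseteq> mset ` {xs. set xs \<subseteq> {..p} \<and> length xs \<le> p}"
  proof
    fix lam assume lam: "lam \<in> partitions p"
    obtain xs where xs: "mset xs = lam" using ex_mset by blast
    have "set xs \<subseteq> {..p}"
      using lam xs mem_le_sum_mset by (auto simp: partitions_def)
    moreover have "length xs \<le> p"
      using lam xs size_le_sum_mset[of lam] by (auto simp: partitions_def)
    ultimately show "lam \<in> mset ` {xs. set xs \<subseteq> {..p} \<and> length xs \<le> p}"
      using xs by blast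
  qed
  then show ?thesis by (rule finite_subset) (intro finite_imageI finite_lists_length_le; simp)
qed

lemma lhs_Hw:
  "(\<Sum>lam\<in>partitions p. (\<Prod>k\<in>#lam. real ((2 * k) choose k)) * monomial_sym lam N b)
   = Hw (\<lambda>k. real ((2 * k) choose k)) p N b"
proof -
  let ?f = "\<lambda>\<beta>. \<Prod>i<N. real ((2 * \<beta> i) choose \<beta> i) * b i ^ \<beta> i"
  have img: "nz_exps N ` Sx N p \<subseteq> partitions p"
    by (auto simp: Sx_def partitions_def sum_nz_exps pos_nz_exps)
  have "Hw (\<lambda>k. real ((2 * k) choose k)) p N b = (\<Sum>lam\<in>partitions p. \<Sum>\<beta>\<in>{x\<in>Sx N p. nz_exps N x = lam}. ?f \<beta>)"
    unfolding Hw_def by (rule sum.group[symmetric, OF finite_Sx finite_partitions img])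
  also have "\<dots> = (\<Sum>lam\<in>partitions p. (\<Prod>k\<in>#lam. real ((2 * k) choose k)) * monomial_sym lam N b)"
  proof (rule sum.cong[OF refl])
    fix lam assume lam: "lam \<in> partitions p"
    have set_eq: "{x\<in>Sx N p. nz_exps N x = lam} = {\<alpha>\<in>exps N. nz_exps N \<alpha> = lam}"
      using lam by (auto simp: Sx_def partitions_def sum_nz_exps[symmetric])
    show "(\<Sum>\<beta>\<in>{x\<in>Sx N p. nz_exps N x = lam}. ?f \<beta>) = (\<Prod>k\<in>#lam. real ((2 * k) choose k)) * monomial_sym lam N b"
      unfolding monomial_sym_def set_eq sum_distrib_left
    proof (rule sum.cong[OF refl])
      fix \<alpha> assume "\<alpha> \<in> {\<alpha>\<in>exps N. nz_exps N \<alpha> = lam}"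
      then have "lam = nz_exps N \<alpha>" by simp
      then show "?f \<alpha> = (\<Prod>k\<in>#lam. real ((2 * k) choose k)) * (\<Prod>i<N. b i ^ \<alpha> i)"
        by (simp add: prod_nz_exps prod.distrib)
    qed
  qed
  finally show ?thesis by simp
qed

lemma complete_hom_Hw: "complete_hom q n a = Hw (\<lambda>_. 1) q n a"
  by (simp add: complete_hom_def Hw_def Sx_def)

lemma Fw_sq: "Fw (\<lambda>k. real ((2 * k) choose k)) x * Fw (\<lambda>k. real ((2 * k) choose k)) x = Fw (\<lambda>_. 1) (4 * x)"
proof (rule fps_ext)
  fix k
  have "fps_nth (Fw (\<lambda>k. real ((2 * k) choose k)) x * Fw (\<lambda>k. real ((2 * k) choose k)) x) k
     = (\<Sum>i=0..k. real ((2*i) choose i) * x ^ i * (real ((2*(k-i)) choose (k-i)) * x ^ (k - i)))"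
    by (simp add: fps_mult_nth Fw_def)
  also have "\<dots> = (\<Sum>i=0..k. x ^ k * (real ((2*i) choose i) * real ((2*(k-i)) choose (k-i))))"
  proof (rule sum.cong[OF refl])
    fix i assume "i \<in> {0..k}"
    then have "x ^ i * x ^ (k - i) = x ^ k" by (simp add: power_add[symmetric])
    then show "real ((2*i) choose i) * x ^ i * (real ((2*(k-i)) choose (k-i)) * x ^ (k - i)) = x ^ k * (real ((2*i) choose i) * real ((2*(k-i)) choose (k-i)))"
      by (metis (no_types, lifting) mult.commute mult.left_commute)
  qed
  also have "\<dots> = x ^ k * 4 ^ k" by (simp add: sum_distrib_left[symmetric] central_conv)
  finally show "fps_nth (Fw (\<lambda>k. real ((2 * k) choose k)) x * Fw (\<lambda>k. real ((2 * k) choose k)) x) k = fps_nth (Fw (\<lambda>_. 1) (4 * x)) k"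
    by (simp add: Fw_def power_mult_distrib mult.commute)
qed

lemma prod_double:
  fixes a :: "nat \<Rightarrow> 'a" and f :: "'a \<Rightarrow> 'b::comm_monoid_mult" and n :: nat
  shows "(\<Prod>i<2*n. f (if i < n then a i else a (i - n))) = (\<Prod>i<n. f (a i)) * (\<Prod>i<n. f (a i))"
proof -
  have "{..<2*n} = {0..<n} \<union> {n..<n+n}" by auto
  then have "(\<Prod>i<2*n. f (if i < n then a i else a (i - n))) = (\<Prod>i\<in>{0..<n}. f (if i < n then a i else a (i - n))) * (\<Prod>i\<in>{n..<n+n}. f (if i < n then a i else a (i - n)))"
    by (simp add: prod.union_disjoint ivl_disj_int)
  also have "(\<Prod>i\<in>{n..<n+n}. f (if i < n then a i else a (i - n))) = (\<Prod>i\<in>{0+n..<n+n}. f (a (i - n)))"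
    by (intro prod.cong) auto
  also have "\<dots> = (\<Prod>i\<in>{0..<n}. f (a i))"
    by (subst prod.shift_bounds_nat_ivl) simp
  finally show ?thesis by (simp add: atLeast0LessThan)
qed

lemma Hw_scale: "Hw (\<lambda>_. 1) q n (\<lambda>i. 4 * a i) = 4 ^ q * Hw (\<lambda>_. 1) q n a"
  unfolding Hw_def sum_distrib_left
proof (rule sum.cong[OF refl])
  fix \<beta> assume "\<beta> \<in> Sx n q"
  then have "(\<Sum>i<n. \<beta> i) = q" by (simp add: Sx_def)
  then have "(\<Prod>i<n. (4::real) ^ \<beta> i) = 4 ^ q" by (simp add: power_sum[symmetric])
  then show "(\<Prod>i<n. 1 * (4 * a i) ^ \<beta> i) = 4 ^ q * (\<Prod>i<n. 1 * a i ^ \<beta> i)"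
    by (simp add: power_mult_distrib prod.distrib)
qed

lemma lhs_final:
  "(\<Sum>lam\<in>partitions p. (\<Prod>k\<in>#lam. real ((2 * k) choose k)) *
       monomial_sym lam (2 * n) (\<lambda>j. if j < n then a j else a (j - n)))
   = 4 ^ p * complete_hom p n a"
proof -
  let ?w = "\<lambda>k. real ((2 * k) choose k)"
  have "(\<Prod>i<2*n. Fw ?w (if i < n then a i else a (i - n))) = (\<Prod>i<n. Fw ?w (a i)) * (\<Prod>i<n. Fw ?w (a i))"
    by (rule prod_double)
  also have "\<dots> = (\<Prod>i<n. Fw ?w (a i) * Fw ?w (a i))" by (simp add: prod.distrib)
  also have "\<dots> = (\<Prod>i<n. Fw (\<lambda>_. 1) (4 * a i))" by (simp add: Fw_sq)
  finally have eq: "(\<Prod>i<2*n. Fw ?w (if i < n then a i else a (i - n))) = (\<Prod>i<n. Fw (\<lambda>_. 1) (4 * a i))" .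
  have "(\<Sum>lam\<in>partitions p. (\<Prod>k\<in>#lam. real ((2 * k) choose k)) *
       monomial_sym lam (2 * n) (\<lambda>j. if j < n then a j else a (j - n)))
    = Hw ?w p (2*n) (\<lambda>j. if j < n then a j else a (j - n))" by (rule lhs_Hw)
  also have "\<dots> = fps_nth (\<Prod>i<2*n. Fw ?w (if i < n then a i else a (i - n))) p"
    by (rule Hw_fps)
  also have "\<dots> = fps_nth (\<Prod>i<n. Fw (\<lambda>_. 1) (4 * a i)) p" by (simp only: eq)
  also have "\<dots> = Hw (\<lambda>_. 1) p n (\<lambda>i. 4 * a i)" by (rule Hw_fps[symmetric])
  also have "\<dots> = 4 ^ p * complete_hom p n a" by (simp add: Hw_scale complete_hom_Hw)
  finally show ?thesis .
qed



lemma normal_moments: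
  assumes "prob_space M" and d: "distributed M lborel Z (\<lambda>x. ennreal (std_normal_density x))"
  shows "integrable M (\<lambda>\<omega>. Z \<omega> ^ k)"
    and "prob_space.expectation M (\<lambda>\<omega>. Z \<omega> ^ (2 * j)) = fact (2 * j) / (2 ^ j * fact j)"
proof -
  have i: "integrable lborel (\<lambda>x. std_normal_density x * x ^ k)"
    using integrable_normal_moment[of 1 0 k] by simp
  show "integrable M (\<lambda>\<omega>. Z \<omega> ^ k)"
    using distributed_integrable[OF d, of "\<lambda>x. x ^ k"] i by simp
  have "(\<integral>x. std_normal_density x * x ^ (2 * j) \<partial>lborel) = (\<integral>\<omega>. Z \<omega> ^ (2 * j) \<partial>M)"
    by (rule distributed_integral[OF d]) auto
  then show "prob_space.expectation M (\<lambda>\<omega>. Z \<omega> ^ (2 * j)) = fact (2 * j) / (2 ^ j * fact j)"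
    using integral_std_normal_moment_even[of j] by simp
qed

lemma indep_restrict_compose:
  assumes "prob_space M"
    and ind: "prob_space.indep_vars M (\<lambda>_. borel) W I"
    and AB: "A \<inter> B = {}" "A \<subseteq> I" "B \<subseteq> I"
    and F: "F \<in> borel_measurable (PiM A (\<lambda>_. borel))"
    and G: "G \<in> borel_measurable (PiM B (\<lambda>_. borel))"
  shows "prob_space.indep_var M borel (\<lambda>\<omega>. F (\<lambda>i\<in>A. W i \<omega>)) borel (\<lambda>\<omega>. G (\<lambda>i\<in>B. W i \<omega>))"
proof -
  interpret prob_space M by fact
  have "indep_var borel (F \<circ> (\<lambda>\<omega>. \<lambda>i\<in>A. W i \<omega>)) borel (G \<circ> (\<lambda>\<omega>. \<lambda>i\<in>B. W i \<omega>))"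
    by (rule indep_var_compose[OF indep_var_restrict[OF ind AB] F G])
  then show ?thesis by (simp add: o_def)
qed

lemma central_fact: "fact (2 * l) = (fact l * fact l * real ((2 * l) choose l) :: real)"
proof -
  have "fact l * fact (2 * l - l) * ((2 * l) choose l) = fact (2 * l)"
    by (rule binomial_fact_lemma) simp
  then have "real (fact l * fact l * ((2 * l) choose l)) = real (fact (2 * l))"
    by simp
  then show ?thesis by (simp only: of_nat_mult of_nat_fact)
qed

lemma chi_sum: "(\<Sum>l\<le>j. real (j choose l) * (fact (2 * l) / (2 ^ l * fact l)) *
                 (fact (2 * (j - l)) / (2 ^ (j - l) * fact (j - l)))) = 2 ^ j * fact j"
proof -
  have "(\<Sum>l\<le>j. real (j choose l) * (fact (2 * l) / (2 ^ l * fact l)) *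
                 (fact (2 * (j - l)) / (2 ^ (j - l) * fact (j - l))))
      = (\<Sum>l=0..j. fact j / 2 ^ j * (real ((2 * l) choose l) * real ((2 * (j - l)) choose (j - l))))"
    unfolding atLeast0AtMost[symmetric]
  proof (rule sum.cong[OF refl])
    fix l assume l: "l \<in> {0..j}"
    then have lj: "l \<le> j" by simp
    have bc: "real (j choose l) = fact j / (fact l * fact (j - l))"
      using lj by (simp add: binomial_fact)
    have p2: "(2::real) ^ l * 2 ^ (j - l) = 2 ^ j"
      using lj by (simp add: power_add[symmetric])
    show "real (j choose l) * (fact (2 * l) / (2 ^ l * fact l)) *
                 (fact (2 * (j - l)) / (2 ^ (j - l) * fact (j - l)))
        = fact j / 2 ^ j * (real ((2 * l) choose l) * real ((2 * (j - l)) choose (j - l)))"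
      unfolding bc central_fact[of l] central_fact[of "j - l"] p2[symmetric]
      by (simp add: field_simps)
  qed
  also have "\<dots> = fact j / 2 ^ j * 4 ^ j"
    by (simp only: sum_distrib_left[symmetric] central_conv)
  also have "\<dots> = 2 ^ j * fact j"
  proof -
    have "(4::real) ^ j = 2 ^ j * 2 ^ j" by (simp add: power_mult_distrib[symmetric])
    then show ?thesis by simp
  qed
  finally show ?thesis .
qed

lemma chi_moment:
  assumes "prob_space M"
    and dX: "distributed M lborel X (\<lambda>x. ennreal (std_normal_density x))"
    and dY: "distributed M lborel Y (\<lambda>x. ennreal (std_normal_density x))"
    and ind: "prob_space.indep_var M borel X borel Y"
  shows "integrable M (\<lambda>\<omega>. (X \<omega> ^ 2 + Y \<omega> ^ 2) ^ j)"
    and "prob_space.expectation M (\<lambda>\<omega>. (X \<omega> ^ 2 + Y \<omega> ^ 2) ^ j) = 2 ^ j * fact j"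
proof -
  interpret prob_space M by fact
  define T where "T l \<omega> = X \<omega> ^ (2 * l) * Y \<omega> ^ (2 * (j - l))" for l \<omega>
  have eq: "(\<lambda>\<omega>. (X \<omega> ^ 2 + Y \<omega> ^ 2) ^ j) = (\<lambda>\<omega>. \<Sum>l\<le>j. real (j choose l) * T l \<omega>)"
    by (rule ext) (simp add: binomial_ring T_def power_mult mult.assoc)
  have indl: "indep_var borel (\<lambda>\<omega>. X \<omega> ^ (2 * l)) borel (\<lambda>\<omega>. Y \<omega> ^ (2 * (j - l)))" for l
    using indep_var_compose[OF ind, of "\<lambda>x. x ^ (2 * l)" borel "\<lambda>x. x ^ (2 * (j - l))" borel]
    by (simp add: o_def)
  have intX: "integrable M (\<lambda>\<omega>. X \<omega> ^ k)" for k by (rule normal_moments(1)[OF assms(1) dX])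
  have intY: "integrable M (\<lambda>\<omega>. Y \<omega> ^ k)" for k by (rule normal_moments(1)[OF assms(1) dY])
  have intT: "integrable M (T l)" for l
    unfolding T_def by (rule indep_var_integrable[OF indl intX intY])
  have ET: "expectation (T l) = fact (2 * l) / (2 ^ l * fact l) * (fact (2 * (j - l)) / (2 ^ (j - l) * fact (j - l)))" for l
    unfolding T_def indep_var_lebesgue_integral[OF indl intX intY]
      normal_moments(2)[OF assms(1) dX] normal_moments(2)[OF assms(1) dY] ..
  show "integrable M (\<lambda>\<omega>. (X \<omega> ^ 2 + Y \<omega> ^ 2) ^ j)"
    unfolding eq using intT by auto
  have "expectation (\<lambda>\<omega>. (X \<omega> ^ 2 + Y \<omega> ^ 2) ^ j) = (\<Sum>l\<le>j. real (j choose l) * expectation (T l))"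
    unfolding eq using intT by (simp add: integral_sum)
  also have "\<dots> = 2 ^ j * fact j"
    unfolding ET using chi_sum[of j] by (simp add: mult.assoc)
  finally show "expectation (\<lambda>\<omega>. (X \<omega> ^ 2 + Y \<omega> ^ 2) ^ j) = 2 ^ j * fact j" .
qed



lemma complete_hom_0: "complete_hom q 0 a = (if q = 0 then 1 else 0)"
  by (simp add: complete_hom_Hw Hw_def Sx_0)

lemma complete_hom_Suc: "complete_hom q (Suc m) a = (\<Sum>j\<le>q. a m ^ j * complete_hom (q - j) m a)"
  by (simp add: complete_hom_Hw Hw_Suc)

lemma sum_moment:
  assumes ps: "prob_space M"
    and dX: "\<And>i. i < n \<Longrightarrow> distributed M lborel (X i) (\<lambda>x. ennreal (std_normal_density x))"
    and dY: "\<And>i. i < n \<Longrightarrow> distributed M lborel (Y i) (\<lambda>x. ennreal (std_normal_density x))"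
    and ind: "prob_space.indep_vars M (\<lambda>_. borel) (\<lambda>(i, b). if b then X i else Y i) ({..<n} \<times> (UNIV :: bool set))"
  shows "m \<le> n \<Longrightarrow> integrable M (\<lambda>\<omega>. (\<Sum>i<m. a i * (X i \<omega> ^ 2 + Y i \<omega> ^ 2)) ^ q) \<and>
     prob_space.expectation M (\<lambda>\<omega>. (\<Sum>i<m. a i * (X i \<omega> ^ 2 + Y i \<omega> ^ 2)) ^ q) = 2 ^ q * fact q * complete_hom q m a"
proof (induction m arbitrary: q)
  case 0
  interpret prob_space M by fact
  show ?case by (simp add: complete_hom_0 power_0_left prob_space)
next
  case (Suc m)
  interpret prob_space M by fact
  let ?W = "\<lambda>(i, b). if b then X i else Y i"
  define S where "S \<omega> = (\<Sum>i<m. a i * (X i \<omega> ^ 2 + Y i \<omega> ^ 2))" for \<omega>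
  define Z where "Z \<omega> = X m \<omega> ^ 2 + Y m \<omega> ^ 2" for \<omega>
  have m: "m < n" using Suc.prems by simp
  have IH: "integrable M (\<lambda>\<omega>. S \<omega> ^ k) \<and> expectation (\<lambda>\<omega>. S \<omega> ^ k) = 2 ^ k * fact k * complete_hom k m a" for k
    using Suc.IH[of k] Suc.prems unfolding S_def by simp
  let ?A = "{..<m} \<times> (UNIV :: bool set)"
  let ?B = "{m} \<times> (UNIV :: bool set)"
  have indSZ: "indep_var borel (\<lambda>\<omega>. S \<omega> ^ k) borel (\<lambda>\<omega>. Z \<omega> ^ j)" for k j
  proof -
    define F where "F f = (\<Sum>i<m. a i * (f (i, True) ^ 2 + f (i, False) ^ 2)) ^ k" for f :: "nat \<times> bool \<Rightarrow> real"
    define G where "G f = (f (m, True) ^ 2 + f (m, False) ^ 2) ^ j" for f :: "nat \<times> bool \<Rightarrow> real"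
    have F: "F \<in> borel_measurable (PiM ?A (\<lambda>_. borel))"
      unfolding F_def by measurable
    have G: "G \<in> borel_measurable (PiM ?B (\<lambda>_. borel))"
      unfolding G_def by measurable
    have "indep_var borel (\<lambda>\<omega>. F (\<lambda>i\<in>?A. ?W i \<omega>)) borel (\<lambda>\<omega>. G (\<lambda>i\<in>?B. ?W i \<omega>))"
      by (rule indep_restrict_compose[OF ps ind _ _ _ F G]) (use m in auto)
    moreover have "(\<lambda>\<omega>. F (\<lambda>i\<in>?A. ?W i \<omega>)) = (\<lambda>\<omega>. S \<omega> ^ k)"
      unfolding F_def S_def by (intro ext arg_cong[where f="\<lambda>x. x ^ k"] sum.cong) auto
    moreover have "(\<lambda>\<omega>. G (\<lambda>i\<in>?B. ?W i \<omega>)) = (\<lambda>\<omega>. Z \<omega> ^ j)"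
      unfolding G_def Z_def by auto
    ultimately show ?thesis by simp
  qed
  have indXY: "indep_var borel (X m) borel (Y m)"
  proof -
    have "indep_var borel (\<lambda>\<omega>. (\<lambda>f. f (m, True)) (\<lambda>i\<in>{(m, True)}. ?W i \<omega>)) borel (\<lambda>\<omega>. (\<lambda>f. f (m, False)) (\<lambda>i\<in>{(m, False)}. ?W i \<omega>))"
      by (rule indep_restrict_compose[OF ps ind]) (use m in auto)
    then show ?thesis by simp
  qed
  have Zmom: "integrable M (\<lambda>\<omega>. Z \<omega> ^ j) \<and> expectation (\<lambda>\<omega>. Z \<omega> ^ j) = 2 ^ j * fact j" for j
    using chi_moment[OF ps dX[OF m] dY[OF m] indXY, of j] unfolding Z_def by simp
  define U where "U j \<omega> = S \<omega> ^ (q - j) * Z \<omega> ^ j" for j \<omega>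
  have intU: "integrable M (U j)" for j
    unfolding U_def using indep_var_integrable[OF indSZ] IH Zmom by blast
  have EU: "expectation (U j) = 2 ^ (q - j) * fact (q - j) * complete_hom (q - j) m a * (2 ^ j * fact j)" for j
    unfolding U_def using indep_var_lebesgue_integral[OF indSZ] IH Zmom by simp
  have eq: "(\<lambda>\<omega>. (\<Sum>i<Suc m. a i * (X i \<omega> ^ 2 + Y i \<omega> ^ 2)) ^ q)
      = (\<lambda>\<omega>. \<Sum>j\<le>q. real (q choose j) * a m ^ j * U j \<omega>)"
  proof
    fix \<omega>
    have "(\<Sum>i<Suc m. a i * (X i \<omega> ^ 2 + Y i \<omega> ^ 2)) ^ q = (a m * Z \<omega> + S \<omega>) ^ q"
      by (simp add: S_def Z_def add.commute)
    also have "\<dots> = (\<Sum>j\<le>q. real (q choose j) * (a m * Z \<omega>) ^ j * S \<omega> ^ (q - j))"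
      by (rule binomial_ring)
    also have "\<dots> = (\<Sum>j\<le>q. real (q choose j) * a m ^ j * U j \<omega>)"
      by (simp add: U_def power_mult_distrib mult_ac)
    finally show "(\<Sum>i<Suc m. a i * (X i \<omega> ^ 2 + Y i \<omega> ^ 2)) ^ q = (\<Sum>j\<le>q. real (q choose j) * a m ^ j * U j \<omega>)" .
  qed
  have "expectation (\<lambda>\<omega>. \<Sum>j\<le>q. real (q choose j) * a m ^ j * U j \<omega>)
      = (\<Sum>j\<le>q. real (q choose j) * a m ^ j * expectation (U j))"
    using intU by (simp add: integral_sum)
  also have "\<dots> = (\<Sum>j\<le>q. 2 ^ q * fact q * (a m ^ j * complete_hom (q - j) m a))"
  proof (rule sum.cong[OF refl])
    fix j assume "j \<in> {..q}"
    then have jq: "j \<le> q" by simp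
    have bc: "real (q choose j) = fact q / (fact j * fact (q - j))"
      using jq by (simp add: binomial_fact)
    have p2: "(2::real) ^ (q - j) * 2 ^ j = 2 ^ q"
      using jq by (simp add: power_add[symmetric])
    show "real (q choose j) * a m ^ j * expectation (U j) = 2 ^ q * fact q * (a m ^ j * complete_hom (q - j) m a)"
      unfolding EU bc p2[symmetric] by (simp add: field_simps)
  qed
  also have "\<dots> = 2 ^ q * fact q * complete_hom q (Suc m) a"
    by (simp add: complete_hom_Suc sum_distrib_left)
  finally show ?case unfolding eq using intU by auto
qed


theorem lemma4p2:
  fixes M :: "'w measure" and X Y :: "nat \<Rightarrow> 'w \<Rightarrow> real"
    and a :: "nat \<Rightarrow> real" and n p :: nat
  assumes "prob_space M"
    and "\<And>i. i < n \<Longrightarrow> distributed M lborel (X i) std_normal_density"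
    and "\<And>i. i < n \<Longrightarrow> distributed M lborel (Y i) std_normal_density"
    and "prob_space.indep_vars M (\<lambda>_. borel)
           (\<lambda>(i, b). if b then X i else Y i) ({..<n} \<times> (UNIV :: bool set))"
    and "1 \<le> p"
  shows "fact p / 2 ^ p *
           (\<Sum>lam\<in>partitions p.
              (\<Prod>k\<in>#lam. real ((2 * k) choose k)) *
              monomial_sym lam (2 * n) (\<lambda>j. if j < n then a j else a (j - n)))
         = prob_space.expectation M (\<lambda>\<omega>. (\<Sum>i<n. a i * (X i \<omega> ^ 2 + Y i \<omega> ^ 2)) ^ p)
       \<and> prob_space.expectation M (\<lambda>\<omega>. (\<Sum>i<n. a i * (X i \<omega> ^ 2 + Y i \<omega> ^ 2)) ^ p)
         = 2 ^ p * fact p * complete_hom p n a"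
proof -
  have E: "prob_space.expectation M (\<lambda>\<omega>. (\<Sum>i<n. a i * (X i \<omega> ^ 2 + Y i \<omega> ^ 2)) ^ p)
         = 2 ^ p * fact p * complete_hom p n a"
    using sum_moment[OF assms(1-4), of n a p] by simp
  have "(4::real) ^ p = 2 ^ p * 2 ^ p" by (simp add: power_mult_distrib[symmetric])
  then have L: "fact p / 2 ^ p *
           (\<Sum>lam\<in>partitions p.
              (\<Prod>k\<in>#lam. real ((2 * k) choose k)) *
              monomial_sym lam (2 * n) (\<lambda>j. if j < n then a j else a (j - n)))
        = 2 ^ p * fact p * complete_hom p n a"
    unfolding lhs_final by simp
  show ?thesis using E L by simp
qed

end
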